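(* In the online ADDIS setting of the context, assume the null $p$-values are conditionally uniformly conservative, that $\tau_j>\lambda_j\ge\alpha_j$ for all $j$, and that there is $\epsilon>0$ with $\tau_j-\lambda_j>\epsilon$ for all $j$. Let $T_{\mathrm{stop}}$ be a stopping time with respect to $(\mathcal F^t)_{t\ge0}$ with $\mathbb E[T_{\mathrm{stop}}]<\infty$. Then any procedure that maintains $\widehat{\mathrm{FDP}}_{\mathrm{ADDIS}}(t)\le\alpha$ for all $t\in\mathbb N$ satisfies $\mathrm{mFDR}(T_{\mathrm{stop}})=\frac{\mathbb E[|\mathcal H_0\cap R(T_{\mathrm{stop}})|]}{\mathbb E[|R(T_{\mathrm{stop}})|\vee1]}\le\alpha$.
   Context: Let $P_1,P_2,\dots$ be $p$-values for hypotheses $H_1,H_2,\dots$, and let $\mathcal H_0\subseteq\mathbb N$ be the set of indices of true nulls. Fix $\alpha\in(0,1)$. Sequences $\{\alpha_j\},\{\lambda_j\},\{\tau_j\}$ in $[0,1]$ define $S_j=\mathbf 1\{P_j\le\tau_j\}$, $C_j=\mathbf 1\{P_j\le\lambda_j\}$, $R_j=\mathbf 1\{P_j\le\alpha_j\}$, $R(t)=\{j\le t:R_j=1\}$; $\mathcal F^t=\sigma(R_{1:t},C_{1:t},S_{1:t})$, $\mathcal F^0$ trivial; $\alpha_t,\lambda_t,\tau_t$ are $\mathcal F^{t-1}$-measurable. Null $p$-values are conditionally uniformly conservative if for every $t\in\mathcal H_0$ and all $x,\tau\in(0,1)$, $\Pr(P_t/\tau\le x\mid P_t\le\tau,\mathcal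 F^{t-1})\le x$. $\widehat{\mathrm{FDP}}_{\mathrm{ADDIS}}(t)=\big(\sum_{j\le t}\alpha_j\frac{\mathbf 1\{\lambda_j<P_j\le\tau_j\}}{\tau_j-\lambda_j}\big)/(|R(t)|\vee1)$. *)

theory Defs
  imports "HOL-Probability.Probability"
begin

definition rej_set :: "(nat \<Rightarrow> 'a \<Rightarrow> real) \<Rightarrow> (nat \<Rightarrow> 'a \<Rightarrow> real) \<Rightarrow> nat \<Rightarrow> 'a \<Rightarrow> nat set"
  where "rej_set P al t \<omega> = {j \<in> {1..t}. P j \<omega> \<le> al j \<omega>}"

definition addis_events ::
  "'a measure \<Rightarrow> (nat \<Rightarrow> 'a \<Rightarrow> real) \<Rightarrow> (nat \<Rightarrow> 'a \<Rightarrow> real) \<Rightarrow> (nat \<Rightarrow> 'a \<Rightarrow> real)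
   \<Rightarrow> (nat \<Rightarrow> 'a \<Rightarrow> real) \<Rightarrow> nat \<Rightarrow> 'a set set"
  where "addis_events M P al la ta j =
    {{\<omega> \<in> space M. P j \<omega> \<le> al j \<omega>},
     {\<omega> \<in> space M. P j \<omega> \<le> la j \<omega>},
     {\<omega> \<in> space M. P j \<omega> \<le> ta j \<omega>}}"

text \<open>F^t = sigma(R_{1:t}, C_{1:t}, S_{1:t}); F^0 is trivial. Since R_j, C_j, S_j are
  indicators, the generated sigma-algebra is the one generated by the corresponding events.\<close>
definition addis_filtration ::
  "'a measure \<Rightarrow> (nat \<Rightarrow> 'a \<Rightarrow> real) \<Rightarrow> (nat \<Rightarrow> 'a \<Rightarrow> real) \<Rightarrow> (nat \<Rightarrow> 'a \<Rightarrow> real)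
   \<Rightarrow> (nat \<Rightarrow> 'a \<Rightarrow> real) \<Rightarrow> nat \<Rightarrow> 'a measure"
  where "addis_filtration M P al la ta t =
    sigma (space M) (\<Union>j\<in>{1..t}. addis_events M P al la ta j)"

definition FDP_hat_ADDIS ::
  "(nat \<Rightarrow> 'a \<Rightarrow> real) \<Rightarrow> (nat \<Rightarrow> 'a \<Rightarrow> real) \<Rightarrow> (nat \<Rightarrow> 'a \<Rightarrow> real)
   \<Rightarrow> (nat \<Rightarrow> 'a \<Rightarrow> real) \<Rightarrow> nat \<Rightarrow> 'a \<Rightarrow> real"
  where "FDP_hat_ADDIS P al la ta t \<omega> =
    (\<Sum>j\<in>{1..t}. al j \<omega> * (if la j \<omega> < P j \<omega> \<and> P j \<omega> \<le> ta j \<omega> then 1 else 0)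
                   / (ta j \<omega> - la j \<omega>))
    / real (max (card (rej_set P al t \<omega>)) 1)"

text \<open>Conditional uniform conservativeness: for null t and x, tau in (0,1),
  Pr(P_t/tau \<le> x | P_t \<le> tau, F^{t-1}) \<le> x, i.e.
  E[1{P_t/tau \<le> x, P_t \<le> tau} | F^{t-1}] \<le> x * E[1{P_t \<le> tau} | F^{t-1}] almost surely.\<close>
definition cond_unif_conservative ::
  "'a measure \<Rightarrow> (nat \<Rightarrow> 'a measure) \<Rightarrow> (nat \<Rightarrow> 'a \<Rightarrow> real) \<Rightarrow> nat set \<Rightarrow> bool"
  where "cond_unif_conservative M F P H0 =
    (\<forall>t\<in>H0. t \<ge> 1 \<longrightarrow> (\<forall>x \<in> {0<..<1}. \<forall>\<tau> \<in> {0<..<1}.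
       AE \<omega> in M.
         real_cond_exp M (F (t - 1))
            (indicator {\<omega>' \<in> space M. P t \<omega>' / \<tau> \<le> x \<and> P t \<omega>' \<le> \<tau>}) \<omega>
         \<le> x * real_cond_exp M (F (t - 1)) (indicator {\<omega>' \<in> space M. P t \<omega>' \<le> \<tau>}) \<omega>))"

end

theory Submission
  imports Defs
begin

lemma cuc_const:
  assumes PS: "prob_space M" and SA: "subalgebra M G"
    and Pm: "P \<in> borel_measurable M"
    and H: "\<forall>x\<in>{0<..<1}. \<forall>\<tau>\<in>{0<..<1}. AE \<omega> in M.
         real_cond_exp M G (indicator {\<omega>' \<in> space M. P \<omega>' / \<tau> \<le> x \<and> P \<omega>' \<le> \<tau>}) \<omega>
         \<le> x * real_cond_exp M G (indicator {\<omega>' \<in> space M. P \<omega>' \<le> \<tau>}) \<omega>"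
    and wm: "w \<in> borel_measurable G"
    and w0: "\<And>\<omega>. \<omega> \<in> space M \<Longrightarrow> 0 \<le> w \<omega>"
    and wB: "\<And>\<omega>. \<omega> \<in> space M \<Longrightarrow> w \<omega> \<le> B" and B0: "0 \<le> B"
    and c: "0 < c" "c < d" "d < 1"
  shows "(\<integral>\<omega>. w \<omega> * indicator {\<omega>\<in>space M. P \<omega> \<le> c} \<omega> \<partial>M)
     \<le> (c/d) * (\<integral>\<omega>. w \<omega> * indicator {\<omega>\<in>space M. P \<omega> \<le> d} \<omega> \<partial>M)"
proof -
  interpret prob_space M by (rule PS)
  interpret finite_measure_subalgebra M G
    by unfold_locales (rule SA)
  have wM[measurable]: "w \<in> borel_measurable M" by (rule measurable_from_subalg[OF SA wm])
  have [measurable]: "P \<in> borel_measurable M" by (rule Pm)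
  have eqs: "{\<omega>' \<in> space M. P \<omega>' / d \<le> c/d \<and> P \<omega>' \<le> d} = {\<omega>\<in>space M. P \<omega> \<le> c}"
    using c by (auto simp: divide_le_cancel)
  have ae: "AE \<omega> in M. real_cond_exp M G (indicator {\<omega>\<in>space M. P \<omega> \<le> c}) \<omega>
         \<le> (c/d) * real_cond_exp M G (indicator {\<omega>' \<in> space M. P \<omega>' \<le> d}) \<omega>"
  proof -
    have "c/d \<in> {0<..<1}" "d \<in> {0<..<1}" using c by auto
    then have "AE \<omega> in M.
         real_cond_exp M G (indicator {\<omega>' \<in> space M. P \<omega>' / d \<le> c/d \<and> P \<omega>' \<le> d}) \<omega>
         \<le> (c/d) * real_cond_exp M G (indicator {\<omega>' \<in> space M. P \<omega>' \<le> d}) \<omega>"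
      using H by blast
    then show ?thesis unfolding eqs .
  qed
  have intb: "integrable M (\<lambda>\<omega>. w \<omega> * indicator {\<omega>\<in>space M. P \<omega> \<le> e} \<omega>)" for e :: real
    by (rule integrable_const_bound[where B=B]) (auto simp: w0 wB B0 indicator_def)
  have i1: "(\<integral>\<omega>. w \<omega> * indicator {\<omega>\<in>space M. P \<omega> \<le> c} \<omega> \<partial>M)
      = (\<integral>\<omega>. w \<omega> * real_cond_exp M G (indicator {\<omega>\<in>space M. P \<omega> \<le> c}) \<omega> \<partial>M)"
    by (rule real_cond_exp_intg(2)[symmetric, OF intb wm]) measurable
  have i2: "(\<integral>\<omega>. w \<omega> * indicator {\<omega>\<in>space M. P \<omega> \<le> d} \<omega> \<partial>M)
      = (\<integral>\<omega>. w \<omega> * real_cond_exp M G (indicator {\<omega>\<in>space M. P \<omega> \<le> d}) \<omega> \<partial>M)"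
    by (rule real_cond_exp_intg(2)[symmetric, OF intb wm]) measurable
  have j1: "integrable M (\<lambda>\<omega>. w \<omega> * real_cond_exp M G (indicator {\<omega>\<in>space M. P \<omega> \<le> c}) \<omega>)"
    by (rule real_cond_exp_intg(1)[OF intb wm]) measurable
  have j2: "integrable M (\<lambda>\<omega>. w \<omega> * real_cond_exp M G (indicator {\<omega>\<in>space M. P \<omega> \<le> d}) \<omega>)"
    by (rule real_cond_exp_intg(1)[OF intb wm]) measurable
  have "(\<integral>\<omega>. w \<omega> * real_cond_exp M G (indicator {\<omega>\<in>space M. P \<omega> \<le> c}) \<omega> \<partial>M)
     \<le> (\<integral>\<omega>. (c/d) * (w \<omega> * real_cond_exp M G (indicator {\<omega>\<in>space M. P \<omega> \<le> d}) \<omega>) \<partial>M)"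
  proof (rule integral_mono_AE[OF j1])
    show "integrable M (\<lambda>\<omega>. (c/d) * (w \<omega> * real_cond_exp M G (indicator {\<omega>\<in>space M. P \<omega> \<le> d}) \<omega>))"
      using j2 by simp
    show "AE \<omega> in M. w \<omega> * real_cond_exp M G (indicator {\<omega>\<in>space M. P \<omega> \<le> c}) \<omega>
        \<le> (c/d) * (w \<omega> * real_cond_exp M G (indicator {\<omega>\<in>space M. P \<omega> \<le> d}) \<omega>)"
      using ae AE_space
    proof eventually_elim
      case (elim \<omega>)
      have "w \<omega> * real_cond_exp M G (indicator {\<omega>\<in>space M. P \<omega> \<le> c}) \<omega>
          \<le> w \<omega> * ((c/d) * real_cond_exp M G (indicator {\<omega>\<in>space M. P \<omega> \<le> d}) \<omega>)"
        using elim(1) w0[OF elim(2)] by (rule mult_left_mono)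
      then show ?case by (simp add: ac_simps)
    qed
  qed
  then show ?thesis using i1 i2 by simp
qed

lemma integral_le_by_cells:
  fixes f g :: "'a \<Rightarrow> real"
  assumes I: "finite I" and kI: "\<And>\<omega>. \<omega> \<in> space M \<Longrightarrow> \<kappa> \<omega> \<in> I"
    and Cm: "\<And>i. i \<in> I \<Longrightarrow> {\<omega>\<in>space M. \<kappa> \<omega> = i} \<in> sets M"
    and fi: "integrable M f" and gi: "integrable M g"
    and le: "\<And>i. i \<in> I \<Longrightarrow> (\<integral>\<omega>. f \<omega> * indicator {\<omega>\<in>space M. \<kappa> \<omega> = i} \<omega> \<partial>M)
                \<le> (\<integral>\<omega>. g \<omega> * indicator {\<omega>\<in>space M. \<kappa> \<omega> = i} \<omega> \<partial>M)"
  shows "(\<integral>\<omega>. f \<omega> \<partial>M) \<le> (\<integral>\<omega>. g \<omega> \<partial>M)"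
proof -
  have dec: "(\<integral>\<omega>. h \<omega> \<partial>M) = (\<Sum>i\<in>I. (\<integral>\<omega>. h \<omega> * indicator {\<omega>\<in>space M. \<kappa> \<omega> = i} \<omega> \<partial>M))"
    if hi: "integrable M h" for h :: "'a \<Rightarrow> real"
  proof -
    have "(\<integral>\<omega>. h \<omega> \<partial>M) = (\<integral>\<omega>. (\<Sum>i\<in>I. h \<omega> * indicator {\<omega>\<in>space M. \<kappa> \<omega> = i} \<omega>) \<partial>M)"
    proof (intro Bochner_Integration.integral_cong refl)
      fix \<omega> assume \<omega>: "\<omega> \<in> space M"
      have "(\<Sum>i\<in>I. h \<omega> * indicator {\<omega>\<in>space M. \<kappa> \<omega> = i} \<omega>)
          = (\<Sum>i\<in>I. if \<kappa> \<omega> = i then h \<omega> else 0)"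
        by (rule sum.cong) (auto simp: \<omega> indicator_def)
      also have "\<dots> = h \<omega>" using kI[OF \<omega>] I by (simp add: sum.delta)
      finally show "h \<omega> = (\<Sum>i\<in>I. h \<omega> * indicator {\<omega>\<in>space M. \<kappa> \<omega> = i} \<omega>)" by simp
    qed
    also have "\<dots> = (\<Sum>i\<in>I. (\<integral>\<omega>. h \<omega> * indicator {\<omega>\<in>space M. \<kappa> \<omega> = i} \<omega> \<partial>M))"
    proof (rule Bochner_Integration.integral_sum[where I=I and f="\<lambda>i \<omega>. h \<omega> * indicator {\<omega>\<in>space M. \<kappa> \<omega> = i} \<omega>"])
      fix i assume "i \<in> I"
      from integrable_mult_indicator[OF Cm[OF this] hi]
      show "integrable M (\<lambda>\<omega>. h \<omega> * indicator {\<omega>\<in>space M. \<kappa> \<omega> = i} \<omega>)"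
        by (simp add: mult.commute)
    qed
    finally show ?thesis .
  qed
  show ?thesis unfolding dec[OF fi] dec[OF gi] by (rule sum_mono) (rule le)
qed

lemma cuc_random:
  assumes PS: "prob_space M" and SA: "subalgebra M G"
    and Pm: "P \<in> borel_measurable M"
    and H: "\<forall>x\<in>{0<..<1}. \<forall>\<tau>\<in>{0<..<1}. AE \<omega> in M.
         real_cond_exp M G (indicator {\<omega>' \<in> space M. P \<omega>' / \<tau> \<le> x \<and> P \<omega>' \<le> \<tau>}) \<omega>
         \<le> x * real_cond_exp M G (indicator {\<omega>' \<in> space M. P \<omega>' \<le> \<tau>}) \<omega>"
    and wm: "w \<in> borel_measurable G"
    and w0: "\<And>\<omega>. \<omega> \<in> space M \<Longrightarrow> 0 \<le> w \<omega>"
    and wB: "\<And>\<omega>. \<omega> \<in> space M \<Longrightarrow> w \<omega> \<le> B" and B0: "0 \<le> B"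
    and sm: "s \<in> borel_measurable G" and tm: "t \<in> borel_measurable G"
    and st: "\<And>\<omega>. \<omega> \<in> space M \<Longrightarrow> 0 \<le> s \<omega> \<and> s \<omega> \<le> t \<omega> \<and> t \<omega> \<le> 1 \<and> 0 < t \<omega>"
  shows "(\<integral>\<omega>. w \<omega> * indicator {\<omega>\<in>space M. P \<omega> \<le> s \<omega>} \<omega> \<partial>M)
     \<le> (\<integral>\<omega>. w \<omega> * (s \<omega> / t \<omega>) * indicator {\<omega>\<in>space M. P \<omega> \<le> t \<omega>} \<omega> \<partial>M)"
proof -
  interpret prob_space M by (rule PS)
  have [measurable]: "w \<in> borel_measurable M" by (rule measurable_from_subalg[OF SA wm])
  have [measurable]: "s \<in> borel_measurable M" by (rule measurable_from_subalg[OF SA sm])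
  have [measurable]: "t \<in> borel_measurable M" by (rule measurable_from_subalg[OF SA tm])
  have [measurable]: "P \<in> borel_measurable M" by (rule Pm)
  have [measurable]: "w \<in> borel_measurable G" "s \<in> borel_measurable G" "t \<in> borel_measurable G"
    using wm sm tm by auto
  have bnd: "integrable M f" if "f \<in> borel_measurable M" "\<And>\<omega>. \<omega> \<in> space M \<Longrightarrow> \<bar>f \<omega>\<bar> \<le> K"
    for f :: "'a \<Rightarrow> real" and K
    by (rule integrable_const_bound[where B=K]) (use that in auto)
  define sn where "sn n \<omega> = (of_int \<lfloor>s \<omega> * (real n + 1)\<rfloor> + 1) / (real n + 1)" for n \<omega>
  define tn where "tn n \<omega> = (of_int \<lceil>t \<omega> * (real n + 1)\<rceil> - 1) / (real n + 1)" for n \<omega>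
  define rn where "rn n \<omega> = (if sn n \<omega> < tn n \<omega> then sn n \<omega> / tn n \<omega> else 1)" for n \<omega>
  have sn_b: "s \<omega> < sn n \<omega> \<and> sn n \<omega> \<le> s \<omega> + 1 / (real n + 1)" for n \<omega>
  proof -
    let ?x = "s \<omega> * (real n + 1)"
    have N: "real n + 1 > 0" by simp
    have a: "of_int \<lfloor>?x\<rfloor> + 1 \<le> ?x + 1" "?x < of_int \<lfloor>?x\<rfloor> + 1" by linarith+
    have "(of_int \<lfloor>?x\<rfloor> + 1) / (real n + 1) \<le> (?x + 1) / (real n + 1)"
      by (rule divide_right_mono[OF a(1)]) simp
    moreover have "?x / (real n + 1) < (of_int \<lfloor>?x\<rfloor> + 1) / (real n + 1)"
      by (rule divide_strict_right_mono[OF a(2) N])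
    moreover have "(?x + 1) / (real n + 1) = s \<omega> + 1 / (real n + 1)" "?x / (real n + 1) = s \<omega>"
      using N by (auto simp: field_simps)
    ultimately show ?thesis unfolding sn_def by simp
  qed
  have tn_b: "tn n \<omega> < t \<omega> \<and> t \<omega> - 1 / (real n + 1) \<le> tn n \<omega>" for n \<omega>
  proof -
    let ?x = "t \<omega> * (real n + 1)"
    have N: "real n + 1 > 0" by simp
    have a: "?x - 1 \<le> of_int \<lceil>?x\<rceil> - 1" "of_int \<lceil>?x\<rceil> - 1 < ?x" by linarith+
    have "(?x - 1) / (real n + 1) \<le> (of_int \<lceil>?x\<rceil> - 1) / (real n + 1)"
      by (rule divide_right_mono[OF a(1)]) simp
    moreover have "(of_int \<lceil>?x\<rceil> - 1) / (real n + 1) < ?x / (real n + 1)"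
      by (rule divide_strict_right_mono[OF a(2) N])
    moreover have "(?x - 1) / (real n + 1) = t \<omega> - 1 / (real n + 1)" "?x / (real n + 1) = t \<omega>"
      using N by (auto simp: field_simps)
    ultimately show ?thesis unfolding tn_def by simp
  qed
  have rn_b: "0 \<le> rn n \<omega> \<and> rn n \<omega> \<le> 1" if "\<omega> \<in> space M" for n \<omega>
  proof -
    have "0 < sn n \<omega>" using sn_b[of \<omega> n] st[OF that] by linarith
    then show ?thesis unfolding rn_def by auto
  qed
  have [measurable]: "sn n \<in> borel_measurable M" "tn n \<in> borel_measurable M" "rn n \<in> borel_measurable M" for n
    unfolding sn_def tn_def rn_def by measurable
  define f where "f \<omega> = w \<omega> * indicator {\<omega>\<in>space M. P \<omega> \<le> s \<omega>} \<omega>" for \<omega>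
  define g where "g n \<omega> = w \<omega> * rn n \<omega> * indicator {\<omega>\<in>space M. P \<omega> \<le> t \<omega>} \<omega>" for n \<omega>
  define h where "h \<omega> = w \<omega> * (s \<omega> / t \<omega>) * indicator {\<omega>\<in>space M. P \<omega> \<le> t \<omega>} \<omega>" for \<omega>
  have [measurable]: "f \<in> borel_measurable M" "g n \<in> borel_measurable M" "h \<in> borel_measurable M" for n
    unfolding f_def g_def h_def by measurable
  have fi: "integrable M f"
    by (rule bnd[of _ B]) (auto simp: f_def indicator_def w0 wB B0 abs_of_nonneg)
  have g_b: "\<bar>g n \<omega>\<bar> \<le> B" if "\<omega> \<in> space M" for n \<omega>
  proof -
    have "0 \<le> w \<omega> * rn n \<omega>" "w \<omega> * rn n \<omega> \<le> w \<omega> * 1"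
      using w0[OF that] rn_b[OF that, of n] by (simp_all add: mult_left_mono mult_nonneg_nonneg mult_left_le)
    then show ?thesis using wB[OF that] unfolding g_def indicator_def by auto
  qed
  have gi: "integrable M (g n)" for n
    by (rule bnd[of _ B]) (use g_b in auto)
  have spG: "space G = space M" using SA by (simp add: subalgebra_def)
  have A: "(\<integral>\<omega>. f \<omega> \<partial>M) \<le> (\<integral>\<omega>. g n \<omega> \<partial>M)" for n
  proof (rule integral_le_by_cells[where I="{0..int n+1} \<times> {0..int n+1}"
        and \<kappa>="\<lambda>\<omega>. (\<lfloor>s \<omega> * (real n + 1)\<rfloor>, \<lceil>t \<omega> * (real n + 1)\<rceil>)"])
    let ?N = "real n + 1"
    have CG: "{\<omega>\<in>space M. (\<lfloor>s \<omega> * ?N\<rfloor>, \<lceil>t \<omega> * ?N\<rceil>) = i} \<in> sets G" for i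
    proof -
      obtain a b where i: "i = (a, b)" by (cases i)
      have "{\<omega>\<in>space G. \<lfloor>s \<omega> * ?N\<rfloor> = a \<and> \<lceil>t \<omega> * ?N\<rceil> = b} \<in> sets G" by measurable
      then show ?thesis by (simp add: i spG)
    qed
    show "{\<omega>\<in>space M. (\<lfloor>s \<omega> * ?N\<rfloor>, \<lceil>t \<omega> * ?N\<rceil>) = i} \<in> sets M" for i
      using CG[of i] SA by (auto simp: subalgebra_def)
    show "finite ({0..int n+1} \<times> {0..int n+1})" by simp
    show "(\<lfloor>s \<omega> * ?N\<rfloor>, \<lceil>t \<omega> * ?N\<rceil>) \<in> {0..int n+1} \<times> {0..int n+1}" if \<omega>: "\<omega> \<in> space M" for \<omega>
    proof -
      have x: "0 \<le> s \<omega> * ?N" "s \<omega> * ?N \<le> 1 * ?N" "0 \<le> t \<omega> * ?N" "t \<omega> * ?N \<le> 1 * ?N"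
        using st[OF \<omega>] by (intro mult_right_mono mult_nonneg_nonneg; simp)+
      have "0 \<le> \<lfloor>s \<omega> * ?N\<rfloor>" using x by simp
      moreover have "\<lfloor>s \<omega> * ?N\<rfloor> \<le> int n + 1"
      proof -
        have "\<lfloor>s \<omega> * ?N\<rfloor> \<le> \<lfloor>1 * ?N\<rfloor>" by (rule floor_mono[OF x(2)])
        moreover have "\<lfloor>1 * ?N\<rfloor> = int n + 1" by simp
        ultimately show ?thesis by simp
      qed
      moreover have "0 \<le> \<lceil>t \<omega> * ?N\<rceil>" using ceiling_mono[OF x(3)] by simp
      moreover have "\<lceil>t \<omega> * ?N\<rceil> \<le> int n + 1"
      proof -
        have "\<lceil>t \<omega> * ?N\<rceil> \<le> \<lceil>1 * ?N\<rceil>" by (rule ceiling_mono[OF x(4)])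
        moreover have "\<lceil>1 * ?N\<rceil> = int n + 1" by simp
        ultimately show ?thesis by simp
      qed
      ultimately show ?thesis by auto
    qed
    show "integrable M f" by (rule fi)
    show "integrable M (g n)" by (rule gi)
    fix i assume iI: "i \<in> {0..int n+1} \<times> {0..int n+1}"
    obtain a b where i: "i = (a, b)" by (cases i)
    have ab: "0 \<le> a" "b \<le> int n + 1" using iI i by auto
    define C where "C = {\<omega>\<in>space M. (\<lfloor>s \<omega> * ?N\<rfloor>, \<lceil>t \<omega> * ?N\<rceil>) = i}"
    have CG': "C \<in> sets G" unfolding C_def by (rule CG)
    have CM[measurable]: "C \<in> sets M" using CG' SA by (auto simp: subalgebra_def)
    define c where "c = (of_int a + 1) / ?N"
    define d where "d = (of_int b - 1) / ?N"
    have onC: "sn n \<omega> = c \<and> tn n \<omega> = d" if "\<omega> \<in> C" for \<omega>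
      using that unfolding C_def sn_def tn_def c_def d_def i by auto
    have scC: "s \<omega> < c" "d < t \<omega>" if "\<omega> \<in> C" for \<omega>
      using onC[OF that] sn_b[of \<omega> n] tn_b[of n \<omega>] by auto
    have fCi: "integrable M (\<lambda>\<omega>. f \<omega> * indicator C \<omega>)"
      by (rule bnd[of _ B]) (auto simp: f_def indicator_def w0 wB B0)
    have gCi: "integrable M (\<lambda>\<omega>. g n \<omega> * indicator C \<omega>)"
      by (rule bnd[of _ B]) (use g_b in \<open>auto simp: indicator_def B0\<close>)
    show "(\<integral>\<omega>. f \<omega> * indicator C \<omega> \<partial>M) \<le> (\<integral>\<omega>. g n \<omega> * indicator C \<omega> \<partial>M)"
    proof (cases "c < d")
      case False
      show ?thesis
      proof (rule integral_mono[OF fCi gCi])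
        fix \<omega> assume \<omega>: "\<omega> \<in> space M"
        show "f \<omega> * indicator C \<omega> \<le> g n \<omega> * indicator C \<omega>"
        proof (cases "\<omega> \<in> C")
          case True
          then have "rn n \<omega> = 1" using onC[OF True] False by (simp add: rn_def)
          then show ?thesis using True \<omega> st[OF \<omega>] w0[OF \<omega>]
            by (auto simp: f_def g_def indicator_def)
        qed simp
      qed
    next
      case True
      have c0: "0 < c" unfolding c_def using ab by (simp add: field_simps)
      have d1: "d < 1" unfolding d_def using ab by (simp add: field_simps)
      define wc where "wc \<omega> = w \<omega> * indicator C \<omega>" for \<omega>
      have wcG[measurable]: "wc \<in> borel_measurable G" unfolding wc_def using CG' by measurable
      have wcM[measurable]: "wc \<in> borel_measurable M" unfolding wc_def by measurable
      have wc0: "0 \<le> wc \<omega>" and wcB: "wc \<omega> \<le> B" if "\<omega> \<in> space M" for \<omega>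
        using w0[OF that] wB[OF that] B0 by (auto simp: wc_def indicator_def)
      have int_e: "integrable M (\<lambda>\<omega>. wc \<omega> * indicator {\<omega>\<in>space M. P \<omega> \<le> e \<omega>} \<omega>)"
        if [measurable]: "e \<in> borel_measurable M" for e
        by (rule bnd[of _ B]) (auto simp: indicator_def wc0 wcB B0)
      have "(\<integral>\<omega>. f \<omega> * indicator C \<omega> \<partial>M) \<le> (\<integral>\<omega>. wc \<omega> * indicator {\<omega>\<in>space M. P \<omega> \<le> c} \<omega> \<partial>M)"
      proof (rule integral_mono[OF fCi int_e])
        fix \<omega> assume \<omega>: "\<omega> \<in> space M"
        show "f \<omega> * indicator C \<omega> \<le> wc \<omega> * indicator {\<omega>\<in>space M. P \<omega> \<le> c} \<omega>"
        proof (cases "\<omega> \<in> C")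
          case True
          then show ?thesis using scC[OF True] \<omega> w0[OF \<omega>]
            by (auto simp: f_def wc_def indicator_def)
        qed (simp add: wc_def)
      qed simp
      also have "\<dots> \<le> (c/d) * (\<integral>\<omega>. wc \<omega> * indicator {\<omega>\<in>space M. P \<omega> \<le> d} \<omega> \<partial>M)"
        by (rule cuc_const[OF PS SA Pm H wcG wc0 wcB B0 c0 True d1])
      also have "\<dots> \<le> (c/d) * (\<integral>\<omega>. wc \<omega> * indicator {\<omega>\<in>space M. P \<omega> \<le> t \<omega>} \<omega> \<partial>M)"
      proof (rule mult_left_mono)
        show "0 \<le> c / d" using c0 True by simp
        show "(\<integral>\<omega>. wc \<omega> * indicator {\<omega>\<in>space M. P \<omega> \<le> d} \<omega> \<partial>M)
            \<le> (\<integral>\<omega>. wc \<omega> * indicator {\<omega>\<in>space M. P \<omega> \<le> t \<omega>} \<omega> \<partial>M)"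
        proof (rule integral_mono[OF int_e int_e])
          fix \<omega> assume \<omega>: "\<omega> \<in> space M"
          show "wc \<omega> * indicator {\<omega>\<in>space M. P \<omega> \<le> d} \<omega> \<le> wc \<omega> * indicator {\<omega>\<in>space M. P \<omega> \<le> t \<omega>} \<omega>"
          proof (cases "\<omega> \<in> C")
            case True
            then show ?thesis using scC[OF True] \<omega> wc0[OF \<omega>]
              by (auto simp: indicator_def)
          qed (simp add: wc_def)
        qed simp_all
      qed
      also have "\<dots> = (\<integral>\<omega>. (c/d) * (wc \<omega> * indicator {\<omega>\<in>space M. P \<omega> \<le> t \<omega>} \<omega>) \<partial>M)"
        by simp
      also have "\<dots> = (\<integral>\<omega>. g n \<omega> * indicator C \<omega> \<partial>M)"
      proof (intro Bochner_Integration.integral_cong refl)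
        fix \<omega> assume \<omega>: "\<omega> \<in> space M"
        show "(c/d) * (wc \<omega> * indicator {\<omega>\<in>space M. P \<omega> \<le> t \<omega>} \<omega>) = g n \<omega> * indicator C \<omega>"
        proof (cases "\<omega> \<in> C")
          case True
          then have "rn n \<omega> = c / d" using onC[OF True] \<open>c < d\<close> by (simp add: rn_def)
          then show ?thesis using True by (simp add: g_def wc_def)
        qed (simp add: wc_def)
      qed
      finally show ?thesis .
    qed
  qed
  have rlim: "(\<lambda>n. rn n \<omega>) \<longlonglongrightarrow> s \<omega> / t \<omega>" if \<omega>: "\<omega> \<in> space M" for \<omega>
  proof -
    have i0: "(\<lambda>n. 1 / (real n + 1)) \<longlonglongrightarrow> 0"
      using LIMSEQ_inverse_real_of_nat by (simp add: inverse_eq_divide add.commute)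
    have sl: "(\<lambda>n. sn n \<omega>) \<longlonglongrightarrow> s \<omega>"
    proof (rule tendsto_sandwich[where f="\<lambda>n. s \<omega>" and h="\<lambda>n. s \<omega> + 1 / (real n + 1)"])
      show "\<forall>\<^sub>F n in sequentially. s \<omega> \<le> sn n \<omega>" using sn_b by (simp add: less_imp_le)
      show "\<forall>\<^sub>F n in sequentially. sn n \<omega> \<le> s \<omega> + 1 / (real n + 1)" using sn_b by simp
      show "(\<lambda>n. s \<omega> + 1 / (real n + 1)) \<longlonglongrightarrow> s \<omega>" using tendsto_add[OF tendsto_const i0] by simp
    qed simp
    have tl: "(\<lambda>n. tn n \<omega>) \<longlonglongrightarrow> t \<omega>"
    proof (rule tendsto_sandwich[where f="\<lambda>n. t \<omega> - 1 / (real n + 1)" and h="\<lambda>n. t \<omega>"])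
      show "\<forall>\<^sub>F n in sequentially. t \<omega> - 1 / (real n + 1) \<le> tn n \<omega>" using tn_b by simp
      show "\<forall>\<^sub>F n in sequentially. tn n \<omega> \<le> t \<omega>" using tn_b by (simp add: less_imp_le)
      show "(\<lambda>n. t \<omega> - 1 / (real n + 1)) \<longlonglongrightarrow> t \<omega>" using tendsto_diff[OF tendsto_const i0] by simp
    qed simp
    have stw: "0 \<le> s \<omega>" "s \<omega> \<le> t \<omega>" "0 < t \<omega>" using st[OF \<omega>] by auto
    show ?thesis
    proof (cases "s \<omega> < t \<omega>")
      case True
      have "(\<lambda>n. tn n \<omega> - sn n \<omega>) \<longlonglongrightarrow> t \<omega> - s \<omega>" by (rule tendsto_diff[OF tl sl])
      then have "\<forall>\<^sub>F n in sequentially. 0 < tn n \<omega> - sn n \<omega>"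
        using True by (intro order_tendstoD(1)) auto
      then have ev: "\<forall>\<^sub>F n in sequentially. sn n \<omega> / tn n \<omega> = rn n \<omega>"
        by eventually_elim (auto simp: rn_def)
      have "(\<lambda>n. sn n \<omega> / tn n \<omega>) \<longlonglongrightarrow> s \<omega> / t \<omega>"
        using stw by (intro tendsto_divide sl tl) auto
      then show ?thesis using ev by (rule Lim_transform_eventually)
    next
      case False
      then have "s \<omega> = t \<omega>" using stw by auto
      moreover have "rn n \<omega> = 1" for n
        using sn_b[of \<omega> n] tn_b[of n \<omega>] \<open>s \<omega> = t \<omega>\<close> by (auto simp: rn_def)
      ultimately show ?thesis using stw by simp
    qed
  qed
  have lim: "(\<lambda>n. \<integral>\<omega>. g n \<omega> \<partial>M) \<longlonglongrightarrow> (\<integral>\<omega>. h \<omega> \<partial>M)"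
  proof (rule integral_dominated_convergence[where w="\<lambda>_. B"])
    show "AE \<omega> in M. (\<lambda>n. g n \<omega>) \<longlonglongrightarrow> h \<omega>"
    proof (rule AE_I2)
      fix \<omega> assume \<omega>: "\<omega> \<in> space M"
      show "(\<lambda>n. g n \<omega>) \<longlonglongrightarrow> h \<omega>"
        unfolding g_def h_def by (intro tendsto_mult tendsto_const rlim[OF \<omega>])
    qed
    show "AE \<omega> in M. norm (g n \<omega>) \<le> B" for n
      using g_b by (intro AE_I2) auto
  qed auto
  have "(\<integral>\<omega>. f \<omega> \<partial>M) \<le> (\<integral>\<omega>. h \<omega> \<partial>M)"
    by (rule LIMSEQ_le_const[OF lim]) (use A in auto)
  then show ?thesis unfolding f_def h_def .
qed

lemma sum_ind_card: "(\<Sum>j\<in>{1..N::nat}. indicator S j) = real (card ({1..N} \<inter> S))"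
proof -
  have "(\<Sum>j\<in>{1..N::nat}. indicator S j) = (\<Sum>j\<in>{1..N}. if j \<in> S then 1 else (0::real))"
    by (rule sum.cong) (auto simp: indicator_def)
  also have "\<dots> = (\<Sum>j\<in>{j\<in>{1..N}. j \<in> S}. 1)" by (rule sum.inter_filter[symmetric]) simp
  also have "\<dots> = (\<Sum>j\<in>{1..N} \<inter> S. 1)" by (rule sum.cong) auto
  also have "\<dots> = real (card ({1..N} \<inter> S))" by simp
  finally show ?thesis .
qed

lemma alg_id:
  fixes a l t :: real
  assumes "l < t" "0 < t"
  shows "a / t = a / (t - l) - a / (t - l) * (l / t)"
proof -
  have "a / (t - l) - a / (t - l) * (l / t) = a / (t - l) * (1 - l / t)" by (simp only: right_diff_distrib mult_1_right)
  also have "1 - l / t = (t - l) / t" using assms by (simp add: diff_divide_distrib)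
  also have "a / (t - l) * ((t - l) / t) = a / t" using assms by simp
  finally show ?thesis by simp
qed

lemma addis_space: "space (addis_filtration M P al la ta t) = space M"
  unfolding addis_filtration_def by (rule space_measure_of_conv)

lemma addis_sub:
  assumes Pm: "\<And>j. j \<ge> 1 \<Longrightarrow> P j \<in> borel_measurable M"
    and pred: "\<And>t. t \<ge> 1 \<Longrightarrow> al t \<in> borel_measurable (addis_filtration M P al la ta (t - 1)) \<and>
                   la t \<in> borel_measurable (addis_filtration M P al la ta (t - 1)) \<and>
                   ta t \<in> borel_measurable (addis_filtration M P al la ta (t - 1))"
  shows "subalgebra M (addis_filtration M P al la ta t)"
proof (induction t rule: less_induct)
  case (less t)
  have ev: "addis_events M P al la ta j \<subseteq> sets M" if j: "j \<in> {1..t}" for j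
  proof -
    have "j - 1 < t" using j by auto
    then have SA: "subalgebra M (addis_filtration M P al la ta (j - 1))" by (rule less.IH)
    have j1: "j \<ge> 1" using j by auto
    have [measurable]: "al j \<in> borel_measurable M" "la j \<in> borel_measurable M" "ta j \<in> borel_measurable M"
      using measurable_from_subalg[OF SA] pred[OF j1] by auto
    have [measurable]: "P j \<in> borel_measurable M" using Pm[OF j1] .
    show ?thesis unfolding addis_events_def by auto
  qed
  have A: "(\<Union>j\<in>{1..t}. addis_events M P al la ta j) \<subseteq> Pow (space M)"
    using ev sets.sets_into_space by blast
  have "sets (addis_filtration M P al la ta t) = sigma_sets (space M) (\<Union>j\<in>{1..t}. addis_events M P al la ta j)"
    unfolding addis_filtration_def by (rule sets_measure_of[OF A])
  also have "\<dots> \<subseteq> sets M" by (rule sets.sigma_sets_subset) (use ev in blast)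
  finally show ?case unfolding subalgebra_def addis_space by simp
qed

theorem theorem2:
  fixes M :: "'a measure"
    and P al la ta :: "nat \<Rightarrow> 'a \<Rightarrow> real"
    and H0 :: "nat set"
    and \<alpha> \<epsilon> :: real
    and T :: "'a \<Rightarrow> nat"
  defines "F \<equiv> addis_filtration M P al la ta"
  assumes "prob_space M"
    and "\<alpha> \<in> {0<..<1}"
    and P_meas: "\<And>j. j \<ge> 1 \<Longrightarrow> P j \<in> borel_measurable M"
    and range: "\<And>j \<omega>. j \<ge> 1 \<Longrightarrow> \<omega> \<in> space M \<Longrightarrow>
                  al j \<omega> \<in> {0..1} \<and> la j \<omega> \<in> {0..1} \<and> ta j \<omega> \<in> {0..1}"
    and predictable: "\<And>t. t \<ge> 1 \<Longrightarrow> al t \<in> borel_measurable (F (t - 1)) \<and>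
                   la t \<in> borel_measurable (F (t - 1)) \<and> ta t \<in> borel_measurable (F (t - 1))"
    and cuc: "cond_unif_conservative M F P H0"
    and order: "\<And>j \<omega>. j \<ge> 1 \<Longrightarrow> \<omega> \<in> space M \<Longrightarrow> ta j \<omega> > la j \<omega> \<and> la j \<omega> \<ge> al j \<omega>"
    and "\<epsilon> > 0"
    and gap: "\<And>j \<omega>. j \<ge> 1 \<Longrightarrow> \<omega> \<in> space M \<Longrightarrow> ta j \<omega> - la j \<omega> > \<epsilon>"
    and "stopping_time F T"
    and "integrable M (\<lambda>\<omega>. real (T \<omega>))"
    and fdp: "\<And>t \<omega>. t \<ge> 1 \<Longrightarrow> \<omega> \<in> space M \<Longrightarrow> FDP_hat_ADDIS P al la ta t \<omega> \<le> \<alpha>"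
  shows "(\<integral>\<omega>. real (card (H0 \<inter> rej_set P al (T \<omega>) \<omega>)) \<partial>M)
         / (\<integral>\<omega>. real (max (card (rej_set P al (T \<omega>) \<omega>)) 1) \<partial>M) \<le> \<alpha>"
proof -
  interpret prob_space M by fact
  have SA: "subalgebra M (F t)" for t
    unfolding F_def by (rule addis_sub[OF P_meas predictable[unfolded F_def]])
  have spF: "space (F t) = space M" for t unfolding F_def by (rule addis_space)
  have meas: "al j \<in> borel_measurable M \<and> la j \<in> borel_measurable M \<and> ta j \<in> borel_measurable M
      \<and> P j \<in> borel_measurable M" if "j \<ge> 1" for j
    using measurable_from_subalg[OF SA] predictable[OF that] P_meas[OF that] by auto
  define A where "A j = {\<omega>\<in>space M. j \<le> T \<omega>}" for j
  have AF: "A j \<in> sets (F (j - 1))" if "j \<ge> 1" for j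
  proof -
    have "Measurable.pred (F (j - 1)) (\<lambda>x. T x \<le> j - 1)"
      using \<open>stopping_time F T\<close> unfolding stopping_time_def by blast
    then have "{x\<in>space (F (j - 1)). T x \<le> j - 1} \<in> sets (F (j - 1))" by measurable
    then have "space (F (j - 1)) - {x\<in>space (F (j - 1)). T x \<le> j - 1} \<in> sets (F (j - 1))" by auto
    moreover have "space (F (j - 1)) - {x\<in>space (F (j - 1)). T x \<le> j - 1} = A j"
      using that by (auto simp: A_def spF)
    ultimately show ?thesis by simp
  qed
  have AM: "A j \<in> sets M" if "j \<ge> 1" for j
    using AF[OF that] SA[of "j - 1"] by (auto simp: subalgebra_def)
  define X :: "nat \<Rightarrow> 'a \<Rightarrow> real" where "X j \<omega> = indicator (A j) \<omega> * indicator {\<omega>\<in>space M. P j \<omega> \<le> al j \<omega>} \<omega>" for j \<omega>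
  define Y where "Y j \<omega> = indicator (A j) \<omega> * (al j \<omega> * (if la j \<omega> < P j \<omega> \<and> P j \<omega> \<le> ta j \<omega> then 1 else 0)
                   / (ta j \<omega> - la j \<omega>))" for j \<omega>
  have Xm: "X j \<in> borel_measurable M" and Ym: "Y j \<in> borel_measurable M" if "j \<ge> 1" for j
  proof -
    have [measurable]: "al j \<in> borel_measurable M" "la j \<in> borel_measurable M" "ta j \<in> borel_measurable M"
      "P j \<in> borel_measurable M" "A j \<in> sets M" using meas[OF that] AM[OF that] by auto
    show "X j \<in> borel_measurable M" unfolding X_def by measurable
    show "Y j \<in> borel_measurable M" unfolding Y_def by measurable
  qed
  have ratio: "0 \<le> al j \<omega> / (ta j \<omega> - la j \<omega>) \<and> al j \<omega> / (ta j \<omega> - la j \<omega>) \<le> 1 / \<epsilon>"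
    if "j \<ge> 1" "\<omega> \<in> space M" for j \<omega>
  proof -
    have r: "0 \<le> al j \<omega>" "al j \<omega> \<le> 1" using range[OF that] by auto
    have g: "\<epsilon> < ta j \<omega> - la j \<omega>" using gap[OF that] .
    have "al j \<omega> / (ta j \<omega> - la j \<omega>) \<le> 1 / \<epsilon>"
      by (rule frac_le) (use r g \<open>\<epsilon> > 0\<close> in auto)
    moreover have "0 \<le> al j \<omega> / (ta j \<omega> - la j \<omega>)" using r g \<open>\<epsilon> > 0\<close> by simp
    ultimately show ?thesis by simp
  qed
  have Yb: "0 \<le> Y j \<omega> \<and> Y j \<omega> \<le> 1 / \<epsilon>" if "j \<ge> 1" "\<omega> \<in> space M" for j \<omega>
    using ratio[OF that] \<open>\<epsilon> > 0\<close> unfolding Y_def by (auto simp: indicator_def)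
  have Xb: "0 \<le> X j \<omega> \<and> X j \<omega> \<le> 1" for j \<omega>
    unfolding X_def by (auto simp: indicator_def)
  have Xi: "integrable M (X j)" if "j \<ge> 1" for j
    by (rule integrable_const_bound[where B=1]) (use Xb Xm[OF that] in auto)
  have Yi: "integrable M (Y j)" if "j \<ge> 1" for j
    by (rule integrable_const_bound[where B="1/\<epsilon>"]) (use Yb[OF that] Ym[OF that] in \<open>auto intro!: AE_I2\<close>)
  have bnd: "integrable M f" if "f \<in> borel_measurable M" "\<And>\<omega>. \<omega> \<in> space M \<Longrightarrow> \<bar>f \<omega>\<bar> \<le> K"
    for f :: "'a \<Rightarrow> real" and K
    by (rule integrable_const_bound[where B=K]) (use that in auto)
  have perj: "(\<integral>\<omega>. X j \<omega> \<partial>M) \<le> (\<integral>\<omega>. Y j \<omega> \<partial>M)" if j1: "j \<ge> 1" and jH: "j \<in> H0" for j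
  proof -
    have H: "\<forall>x\<in>{0<..<1}. \<forall>\<tau>\<in>{0<..<1}. AE \<omega> in M.
         real_cond_exp M (F (j - 1)) (indicator {\<omega>' \<in> space M. P j \<omega>' / \<tau> \<le> x \<and> P j \<omega>' \<le> \<tau>}) \<omega>
         \<le> x * real_cond_exp M (F (j - 1)) (indicator {\<omega>' \<in> space M. P j \<omega>' \<le> \<tau>}) \<omega>"
      using cuc jH j1 unfolding cond_unif_conservative_def by blast
    have [measurable]: "al j \<in> borel_measurable M" "la j \<in> borel_measurable M" "ta j \<in> borel_measurable M"
      "P j \<in> borel_measurable M" "A j \<in> sets M" using meas[OF j1] AM[OF j1] by auto
    have Gm[measurable]: "al j \<in> borel_measurable (F (j - 1))" "la j \<in> borel_measurable (F (j - 1))"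
      "ta j \<in> borel_measurable (F (j - 1))" "A j \<in> sets (F (j - 1))"
      using predictable[OF j1] AF[OF j1] by auto
    have pw: "0 \<le> al j \<omega> \<and> al j \<omega> \<le> la j \<omega> \<and> la j \<omega> < ta j \<omega> \<and> ta j \<omega> \<le> 1 \<and> 0 \<le> la j \<omega>"
      if "\<omega> \<in> space M" for \<omega> using range[OF j1 that] order[OF j1 that] by auto
    have wA: "(indicator (A j) :: 'a \<Rightarrow> real) \<in> borel_measurable (F (j - 1))"
      using Gm(4) by measurable
    define w2 where "w2 \<omega> = indicator (A j) \<omega> * (al j \<omega> / (ta j \<omega> - la j \<omega>))" for \<omega>
    have w2G: "w2 \<in> borel_measurable (F (j - 1))" unfolding w2_def by measurable
    have w2M[measurable]: "w2 \<in> borel_measurable M" unfolding w2_def by measurable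
    have w2b: "0 \<le> w2 \<omega> \<and> w2 \<omega> \<le> 1 / \<epsilon>" if "\<omega> \<in> space M" for \<omega>
      using ratio[OF j1 that] \<open>\<epsilon> > 0\<close> unfolding w2_def by (auto simp: indicator_def)
    have i1: "(\<integral>\<omega>. indicator (A j) \<omega> * indicator {\<omega>\<in>space M. P j \<omega> \<le> al j \<omega>} \<omega> \<partial>M)
        \<le> (\<integral>\<omega>. indicator (A j) \<omega> * (al j \<omega> / ta j \<omega>) * indicator {\<omega>\<in>space M. P j \<omega> \<le> ta j \<omega>} \<omega> \<partial>M)"
      by (rule cuc_random[OF \<open>prob_space M\<close> SA[of "j - 1"] meas[OF j1, THEN conjunct2, THEN conjunct2, THEN conjunct2] H
            wA _ _ zero_le_one Gm(1) Gm(3)]) (auto simp: indicator_def dest!: pw)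
    have i2: "(\<integral>\<omega>. w2 \<omega> * indicator {\<omega>\<in>space M. P j \<omega> \<le> la j \<omega>} \<omega> \<partial>M)
        \<le> (\<integral>\<omega>. w2 \<omega> * (la j \<omega> / ta j \<omega>) * indicator {\<omega>\<in>space M. P j \<omega> \<le> ta j \<omega>} \<omega> \<partial>M)"
      by (rule cuc_random[OF \<open>prob_space M\<close> SA[of "j - 1"] meas[OF j1, THEN conjunct2, THEN conjunct2, THEN conjunct2] H
            w2G _ _ _ Gm(2) Gm(3), where B="1/\<epsilon>"]) (use \<open>\<epsilon> > 0\<close> in \<open>auto dest: pw w2b\<close>)
    let ?I1 = "\<lambda>\<omega>. w2 \<omega> * indicator {\<omega>\<in>space M. P j \<omega> \<le> ta j \<omega>} \<omega>"
    let ?I2 = "\<lambda>\<omega>. w2 \<omega> * indicator {\<omega>\<in>space M. P j \<omega> \<le> la j \<omega>} \<omega>"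
    let ?I3 = "\<lambda>\<omega>. w2 \<omega> * (la j \<omega> / ta j \<omega>) * indicator {\<omega>\<in>space M. P j \<omega> \<le> ta j \<omega>} \<omega>"
    let ?Y1 = "\<lambda>\<omega>. indicator (A j) \<omega> * (al j \<omega> / ta j \<omega>) * indicator {\<omega>\<in>space M. P j \<omega> \<le> ta j \<omega>} \<omega>"
    have ii1: "integrable M ?I1"
      by (rule bnd[of _ "1/\<epsilon>"]) (use \<open>\<epsilon> > 0\<close> in \<open>auto simp: indicator_def dest: w2b\<close>)
    have ii2: "integrable M ?I2"
      by (rule bnd[of _ "1/\<epsilon>"]) (use \<open>\<epsilon> > 0\<close> in \<open>auto simp: indicator_def dest: w2b\<close>)
    have ii3: "integrable M ?I3"
    proof (rule bnd[of _ "1/\<epsilon>"])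
      fix \<omega> assume \<omega>: "\<omega> \<in> space M"
      have "0 \<le> la j \<omega> / ta j \<omega>" "la j \<omega> / ta j \<omega> \<le> 1" using pw[OF \<omega>] by auto
      then have "0 \<le> w2 \<omega> * (la j \<omega> / ta j \<omega>)" "w2 \<omega> * (la j \<omega> / ta j \<omega>) \<le> w2 \<omega> * 1"
        using w2b[OF \<omega>] by (simp_all only: mult_nonneg_nonneg mult_left_mono)
      then show "\<bar>?I3 \<omega>\<bar> \<le> 1/\<epsilon>" using w2b[OF \<omega>] \<open>\<epsilon> > 0\<close> by (auto simp: indicator_def)
    qed measurable
    have eqY: "(\<integral>\<omega>. Y j \<omega> \<partial>M) = (\<integral>\<omega>. ?I1 \<omega> \<partial>M) - (\<integral>\<omega>. ?I2 \<omega> \<partial>M)"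
    proof -
      have "(\<integral>\<omega>. Y j \<omega> \<partial>M) = (\<integral>\<omega>. ?I1 \<omega> - ?I2 \<omega> \<partial>M)"
      proof (intro Bochner_Integration.integral_cong refl)
        fix \<omega> assume \<omega>: "\<omega> \<in> space M"
        show "Y j \<omega> = ?I1 \<omega> - ?I2 \<omega>"
          using pw[OF \<omega>] \<omega> by (auto simp: Y_def w2_def indicator_def)
      qed
      also have "\<dots> = (\<integral>\<omega>. ?I1 \<omega> \<partial>M) - (\<integral>\<omega>. ?I2 \<omega> \<partial>M)"
        by (rule Bochner_Integration.integral_diff[OF ii1 ii2])
      finally show ?thesis .
    qed
    have eqY1: "(\<integral>\<omega>. ?Y1 \<omega> \<partial>M) = (\<integral>\<omega>. ?I1 \<omega> \<partial>M) - (\<integral>\<omega>. ?I3 \<omega> \<partial>M)"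
    proof -
      have "(\<integral>\<omega>. ?Y1 \<omega> \<partial>M) = (\<integral>\<omega>. ?I1 \<omega> - ?I3 \<omega> \<partial>M)"
      proof (intro Bochner_Integration.integral_cong refl)
        fix \<omega> assume \<omega>: "\<omega> \<in> space M"
        have "al j \<omega> / ta j \<omega> = al j \<omega> / (ta j \<omega> - la j \<omega>) - al j \<omega> / (ta j \<omega> - la j \<omega>) * (la j \<omega> / ta j \<omega>)"
          using pw[OF \<omega>] by (intro alg_id) auto
        then show "?Y1 \<omega> = ?I1 \<omega> - ?I3 \<omega>"
          by (auto simp: w2_def indicator_def)
      qed
      also have "\<dots> = (\<integral>\<omega>. ?I1 \<omega> \<partial>M) - (\<integral>\<omega>. ?I3 \<omega> \<partial>M)"
        by (rule Bochner_Integration.integral_diff[OF ii1 ii3])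
      finally show ?thesis .
    qed
    have "(\<integral>\<omega>. X j \<omega> \<partial>M) \<le> (\<integral>\<omega>. ?Y1 \<omega> \<partial>M)" using i1 unfolding X_def .
    then show ?thesis using eqY eqY1 i2 by linarith
  qed
  define R where "R \<omega> = rej_set P al (T \<omega>) \<omega>" for \<omega>
  define V where "V N \<omega> = (\<Sum>j\<in>{1..N}. if j \<in> H0 then X j \<omega> else 0)" for N \<omega>
  define C where "C N \<omega> = (\<Sum>j\<in>{1..N}. X j \<omega>)" for N \<omega>
  define U where "U N \<omega> = (\<Sum>j\<in>{1..N}. Y j \<omega>)" for N \<omega>
  define Vl where "Vl \<omega> = real (card (H0 \<inter> R \<omega>))" for \<omega>
  define D where "D \<omega> = real (max (card (R \<omega>)) 1)" for \<omega>
  have XR: "X j \<omega> = indicator (R \<omega>) j" if "j \<ge> 1" "\<omega> \<in> space M" for j \<omega>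
    using that by (auto simp: X_def R_def rej_set_def A_def indicator_def)
  have RT: "R \<omega> \<subseteq> {1..T \<omega>}" for \<omega> by (auto simp: R_def rej_set_def)
  have Vc: "V N \<omega> = real (card ({1..N} \<inter> (H0 \<inter> R \<omega>)))" if "\<omega> \<in> space M" for N \<omega>
  proof -
    have "V N \<omega> = (\<Sum>j\<in>{1..N}. indicator (H0 \<inter> R \<omega>) j)"
      unfolding V_def by (rule sum.cong) (use XR that in \<open>auto simp: indicator_def\<close>)
    then show ?thesis using sum_ind_card by simp
  qed
  have Cc: "C N \<omega> = real (card ({1..N} \<inter> R \<omega>))" if "\<omega> \<in> space M" for N \<omega>
  proof -
    have "C N \<omega> = (\<Sum>j\<in>{1..N}. indicator (R \<omega>) j)"
      unfolding C_def by (rule sum.cong) (use XR that in \<open>auto simp: indicator_def\<close>)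
    then show ?thesis using sum_ind_card by simp
  qed
  have Vev: "V N \<omega> = Vl \<omega>" if "\<omega> \<in> space M" "N \<ge> T \<omega>" for N \<omega>
  proof -
    have "{1..N} \<inter> (H0 \<inter> R \<omega>) = H0 \<inter> R \<omega>" using RT[of \<omega>] that(2) by auto
    then show ?thesis using Vc[OF that(1)] by (simp add: Vl_def)
  qed
  have Cev: "max (C N \<omega>) 1 = D \<omega>" if "\<omega> \<in> space M" "N \<ge> T \<omega>" for N \<omega>
  proof -
    have "{1..N} \<inter> R \<omega> = R \<omega>" using RT[of \<omega>] that(2) by auto
    then show ?thesis using Cc[OF that(1)] by (simp add: D_def of_nat_max)
  qed
  have Vm[measurable]: "V N \<in> borel_measurable M" for N
    unfolding V_def by (rule borel_measurable_sum) (use Xm in auto)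
  have Cm[measurable]: "C N \<in> borel_measurable M" for N
    unfolding C_def by (rule borel_measurable_sum) (use Xm in auto)
  have Um[measurable]: "U N \<in> borel_measurable M" for N
    unfolding U_def by (rule borel_measurable_sum) (use Ym in auto)
  have evlim: "(\<lambda>N. f N \<omega>) \<longlonglongrightarrow> g \<omega>" if "\<And>N. N \<ge> T \<omega> \<Longrightarrow> f N \<omega> = g \<omega>"
    for f :: "nat \<Rightarrow> 'a \<Rightarrow> real" and g \<omega>
  proof -
    have "\<forall>\<^sub>F N in sequentially. g \<omega> = f N \<omega>" using that unfolding eventually_sequentially by (intro exI[of _ "T \<omega>"]) auto
    then show ?thesis by (rule Lim_transform_eventually[OF tendsto_const])
  qed
  have Vlm[measurable]: "Vl \<in> borel_measurable M"
    by (rule borel_measurable_LIMSEQ_real[where u=V]) (use evlim Vev in auto)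
  have Dm[measurable]: "D \<in> borel_measurable M"
    by (rule borel_measurable_LIMSEQ_real[where u="\<lambda>N \<omega>. max (C N \<omega>) 1"]) (use evlim[of _ "\<lambda>N \<omega>. max (C N \<omega>) 1" D] Cev in auto)
  have Tint: "integrable M (\<lambda>\<omega>. real (T \<omega>))" by fact
  have cardR: "card (R \<omega>) \<le> T \<omega>" for \<omega>
    using card_mono[OF _ RT[of \<omega>]] by simp
  have Di: "integrable M D"
  proof (rule Bochner_Integration.integrable_bound[where f="\<lambda>\<omega>. real (T \<omega>) + 1"])
    show "integrable M (\<lambda>\<omega>. real (T \<omega>) + 1)" using Tint by simp
    show "AE \<omega> in M. norm (D \<omega>) \<le> norm (real (T \<omega>) + 1)"
    proof (intro AE_I2)
      fix \<omega>
      have "max (card (R \<omega>)) 1 \<le> T \<omega> + 1" using cardR[of \<omega>] by simp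
      then have "real (max (card (R \<omega>)) 1) \<le> real (T \<omega> + 1)" by (rule of_nat_mono)
      then show "norm (D \<omega>) \<le> norm (real (T \<omega>) + 1)" by (simp add: D_def)
    qed
  qed simp
  have D1: "1 \<le> D \<omega>" for \<omega> by (simp add: D_def)
  have UD: "U N \<omega> \<le> \<alpha> * D \<omega>" if \<omega>: "\<omega> \<in> space M" for N \<omega>
  proof -
    define Z where "Z j = al j \<omega> * (if la j \<omega> < P j \<omega> \<and> P j \<omega> \<le> ta j \<omega> then 1 else 0)
                   / (ta j \<omega> - la j \<omega>)" for j
    have Z0: "0 \<le> Z j" if "j \<ge> 1" for j
      using range[OF that \<omega>] order[OF that \<omega>] unfolding Z_def by auto
    have "U N \<omega> = (\<Sum>j\<in>{1..N}. if j \<le> T \<omega> then Z j else 0)"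
      unfolding U_def by (rule sum.cong) (use \<omega> in \<open>auto simp: Y_def Z_def A_def indicator_def\<close>)
    also have "\<dots> = (\<Sum>j\<in>{j\<in>{1..N}. j \<le> T \<omega>}. Z j)" by (rule sum.inter_filter[symmetric]) simp
    also have "\<dots> \<le> (\<Sum>j\<in>{1..T \<omega>}. Z j)"
      by (rule sum_mono2) (use Z0 in auto)
    also have "\<dots> \<le> \<alpha> * D \<omega>"
    proof (cases "T \<omega> = 0")
      case True
      then show ?thesis using D1[of \<omega>] \<open>\<alpha> \<in> {0<..<1}\<close> by simp
    next
      case False
      then have "FDP_hat_ADDIS P al la ta (T \<omega>) \<omega> \<le> \<alpha>" using fdp \<omega> by simp
      moreover have "FDP_hat_ADDIS P al la ta (T \<omega>) \<omega> = (\<Sum>j\<in>{1..T \<omega>}. Z j) / D \<omega>"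
        unfolding FDP_hat_ADDIS_def Z_def D_def R_def by simp
      ultimately show ?thesis using D1[of \<omega>] by (simp add: divide_le_eq mult.commute)
    qed
    finally show ?thesis .
  qed
  have Ui: "integrable M (U N)" for N
    unfolding U_def by (rule Bochner_Integration.integrable_sum) (use Yi in auto)
  have step: "(\<integral>\<omega>. V N \<omega> \<partial>M) \<le> \<alpha> * (\<integral>\<omega>. D \<omega> \<partial>M)" for N
  proof -
    have ti: "integrable M (\<lambda>\<omega>. if j \<in> H0 then X j \<omega> else 0)" if "j \<in> {1..N}" for j
      using Xi[of j] that by (cases "j \<in> H0") auto
    have "(\<integral>\<omega>. V N \<omega> \<partial>M) = (\<Sum>j\<in>{1..N}. (\<integral>\<omega>. (if j \<in> H0 then X j \<omega> else 0) \<partial>M))"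
      unfolding V_def
      by (rule Bochner_Integration.integral_sum[where f="\<lambda>j \<omega>. if j \<in> H0 then X j \<omega> else 0"]) (rule ti)
    also have "\<dots> \<le> (\<Sum>j\<in>{1..N}. (\<integral>\<omega>. Y j \<omega> \<partial>M))"
    proof (rule sum_mono)
      fix j assume j: "j \<in> {1..N}"
      show "(\<integral>\<omega>. (if j \<in> H0 then X j \<omega> else 0) \<partial>M) \<le> (\<integral>\<omega>. Y j \<omega> \<partial>M)"
      proof (cases "j \<in> H0")
        case True
        then show ?thesis using perj[of j] j by simp
      next
        case False
        have "0 \<le> (\<integral>\<omega>. Y j \<omega> \<partial>M)" by (rule integral_nonneg_AE) (use Yb j in \<open>auto intro!: AE_I2\<close>)
        then show ?thesis using False by simp
      qed
    qed
    also have "\<dots> = (\<integral>\<omega>. U N \<omega> \<partial>M)"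
      unfolding U_def
      by (rule Bochner_Integration.integral_sum[where f="\<lambda>j \<omega>. Y j \<omega>", symmetric]) (use Yi in auto)
    also have "\<dots> \<le> (\<integral>\<omega>. \<alpha> * D \<omega> \<partial>M)"
      by (rule integral_mono[OF Ui]) (use Di UD in auto)
    also have "\<dots> = \<alpha> * (\<integral>\<omega>. D \<omega> \<partial>M)" by simp
    finally show ?thesis .
  qed
  have Vlim: "(\<lambda>N. \<integral>\<omega>. V N \<omega> \<partial>M) \<longlonglongrightarrow> (\<integral>\<omega>. Vl \<omega> \<partial>M)"
  proof (rule integral_dominated_convergence[where w="\<lambda>\<omega>. real (T \<omega>)"])
    show "AE \<omega> in M. (\<lambda>N. V N \<omega>) \<longlonglongrightarrow> Vl \<omega>"
      by (intro AE_I2 evlim) (use Vev in auto)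
    show "AE \<omega> in M. norm (V N \<omega>) \<le> real (T \<omega>)" for N
    proof (intro AE_I2)
      fix \<omega> assume \<omega>: "\<omega> \<in> space M"
      have "card ({1..N} \<inter> (H0 \<inter> R \<omega>)) \<le> card (R \<omega>)" by (rule card_mono) (use RT in \<open>auto intro: finite_subset\<close>)
      then have "card ({1..N} \<inter> (H0 \<inter> R \<omega>)) \<le> T \<omega>" using cardR[of \<omega>] by linarith
      then show "norm (V N \<omega>) \<le> real (T \<omega>)" using Vc[OF \<omega>] by simp
    qed
  qed (use Tint in auto)
  have main: "(\<integral>\<omega>. Vl \<omega> \<partial>M) \<le> \<alpha> * (\<integral>\<omega>. D \<omega> \<partial>M)"
    by (rule LIMSEQ_le_const2[OF Vlim]) (use step in auto)
  have "1 \<le> (\<integral>\<omega>. D \<omega> \<partial>M)"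
  proof -
    have "(\<integral>\<omega>. 1 \<partial>M) \<le> (\<integral>\<omega>. D \<omega> \<partial>M)"
      by (rule integral_mono[OF _ Di]) (auto simp: D1)
    then show ?thesis by (simp add: prob_space)
  qed
  then show ?thesis using main unfolding Vl_def D_def R_def by (simp add: pos_divide_le_eq)
qed

end
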